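(* Let $\mathfrak d,M,L\in\mathbb N$, $u\in\mathbb R$, $v\in(u,\infty)$, $R\in[1,\infty)$, $\varepsilon,b\in(0,\infty)$, $l=(l_0,\dots,l_L)\in\mathbb N^{L+1}$ with $l_L=1$ and $\sum_{k=1}^Ll_k(l_{k-1}+1)\le\mathfrak d$, let $D\subseteq[-b,b]^{l_0}$ be compact, let $(\Omega,\mathcal F,\mathbb P)$ be a probability space, let $X_m\colon\Omega\to D$ and $Y_m\colon\Omega\to[u,v]$, $m\in\{1,\dots,M\}$, be functions such that $(X_m,Y_m)$, $m\in\{1,\dots,M\}$, are i.i.d. random variables, let $\mathcal E(f)=\mathbb E[|f(X_1)-Y_1|^2]$ for $f\in C(D,\mathbb R)$, and let $\mathfrak E(\theta,\omega)=\frac1M\sum_{m=1}^M|\mathscr N^{\theta,l}_{u,v}(X_m(\omega))-Y_m(\omega)|^2$ for $\theta\in[-R,R]^{\mathfrak d}$, $\omega\in\Omega$. Then $\Omega\ni\omega\mapsto\sup_{\theta\in[-R,R]^{\mathfrak d}}|\mathfrak E(\theta,\omega)-\mathcal E(\mathscr N^{\theta,l}_{u,v}|_D)|\in[0,\infty]$ is $\mathcal F/\mathcal B([0,\infty])$-measurable and $$\mathbb P\Bigl(\sup_{\theta\in[-R,R]^{\mathfrak d}}|\mathfrak E(\theta)-\mathcal E(\mathscr N^{\theta,l}_{u,v}|_D)|\ge\varepsilon\Bigr)\le 2\max\Bigl\{1,\Bigl[\frac{32L\max\{1,b\}(\|l\|_\infty+1)^LR^L(v-u)}{\varepsilon}\Bigr]^{\mathfrak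 d}\Bigr\}\exp\Bigl(\frac{-\varepsilon^2M}{2(v-u)^4}\Bigr).$$
   Context: $\|\cdot\|_\infty$ is the maximum norm (also applied to $l$). For $r,s\in\mathbb N$, $k\in\mathbb N_0$, $\theta\in\mathbb R^{\mathfrak d}$ with $\mathfrak d\ge k+rs+r$, $\mathcal A^{\theta,k}_{r,s}\colon\mathbb R^s\to\mathbb R^r$ has $i$-th component $x\mapsto\sum_{j=1}^s\theta_{k+(i-1)s+j}x_j+\theta_{k+rs+i}$. $\mathfrak C_{u,v,n}$ applies $y\mapsto\max\{u,\min\{y,v\}\}$ componentwise on $\mathbb R^n$ and $\mathfrak R_n$ applies $y\mapsto\max\{y,0\}$ componentwise. With $s_k=\sum_{j=1}^kl_j(l_{j-1}+1)$, $\mathscr N^{\theta,l}_{u,v}=\mathfrak C_{u,v,l_L}\circ\mathcal A^{\theta,s_{L-1}}_{l_L,l_{L-1}}\circ\mathfrak R_{l_{L-1}}\circ\cdots\circ\mathfrak R_{l_1}\circ\mathcal A^{\theta,0}_{l_1,l_0}\colon\mathbb R^{l_0}\to\mathbb R^{l_L}$ (for $L=1$ just $\mathfrak C_{u,v,l_1}\circ\mathcal A^{\theta,0}_{l_1,l_0}$). *)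

theory Defs
  imports "HOL-Probability.Probability"
begin

text \<open>Vectors in R^n are represented as functions nat => real whose components are
the values at 1..n (1-based, as in the paper); they are 0 outside {1..n}.
Parameter vectors theta are likewise functions nat => real, read at indices 1..d.\<close>

definition affine_map :: "(nat \<Rightarrow> real) \<Rightarrow> nat \<Rightarrow> nat \<Rightarrow> nat \<Rightarrow> (nat \<Rightarrow> real) \<Rightarrow> (nat \<Rightarrow> real)" where
  "affine_map \<theta> k r s x = (\<lambda>i. if i \<in> {1..r}
      then (\<Sum>j=1..s. \<theta> (k + (i - 1) * s + j) * x j) + \<theta> (k + r * s + i) else 0)"

definition clip_map :: "real \<Rightarrow> real \<Rightarrow> nat \<Rightarrow> (nat \<Rightarrow> real) \<Rightarrow> (nat \<Rightarrow> real)" where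
  "clip_map u v n y = (\<lambda>i. if i \<in> {1..n} then max u (min (y i) v) else 0)"

definition relu_map :: "nat \<Rightarrow> (nat \<Rightarrow> real) \<Rightarrow> (nat \<Rightarrow> real)" where
  "relu_map n y = (\<lambda>i. if i \<in> {1..n} then max (y i) 0 else 0)"

definition arch_offset :: "nat list \<Rightarrow> nat \<Rightarrow> nat" where
  "arch_offset l k = (\<Sum>j=1..k. l ! j * (l ! (j - 1) + 1))"

fun hidden_layers :: "(nat \<Rightarrow> real) \<Rightarrow> nat list \<Rightarrow> nat \<Rightarrow> (nat \<Rightarrow> real) \<Rightarrow> (nat \<Rightarrow> real)" where
  "hidden_layers \<theta> l 0 x = x"
| "hidden_layers \<theta> l (Suc k) x =
     relu_map (l ! Suc k) (affine_map \<theta> (arch_offset l k) (l ! Suc k) (l ! k) (hidden_layers \<theta> l k x))"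

definition clipped_net :: "(nat \<Rightarrow> real) \<Rightarrow> nat list \<Rightarrow> real \<Rightarrow> real \<Rightarrow> (nat \<Rightarrow> real) \<Rightarrow> (nat \<Rightarrow> real)" where
  "clipped_net \<theta> l u v x =
     (let L = length l - 1 in
      clip_map u v (l ! L)
        (affine_map \<theta> (arch_offset l (L - 1)) (l ! L) (l ! (L - 1)) (hidden_layers \<theta> l (L - 1) x)))"

definition param_box :: "nat \<Rightarrow> real \<Rightarrow> (nat \<Rightarrow> real) set" where
  "param_box d R = {\<theta>. (\<forall>i\<in>{1..d}. \<bar>\<theta> i\<bar> \<le> R) \<and> (\<forall>i. i \<notin> {1..d} \<longrightarrow> \<theta> i = 0)}"

end

theory Submission
  imports Defs
begin


lemma affine_bound:
  fixes \<theta> x :: "nat \<Rightarrow> real"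
  assumes th: "\<forall>i. \<bar>\<theta> i\<bar> \<le> R" and x: "\<forall>j\<in>{1..s}. \<bar>x j\<bar> \<le> H" and H: "H \<ge> 1"
  shows "\<bar>affine_map \<theta> k r s x i\<bar> \<le> (real s + 1) * R * H"
proof -
  have R0: "R \<ge> 0" using th[rule_format, of 0] by linarith
  show ?thesis
  proof (cases "i \<in> {1..r}")
    case False
    hence "affine_map \<theta> k r s x i = 0" unfolding affine_map_def by auto
    thus ?thesis using R0 H by simp
  next
    case True
    have "\<bar>affine_map \<theta> k r s x i\<bar> \<le> \<bar>\<Sum>j=1..s. \<theta> (k + (i - 1) * s + j) * x j\<bar> + \<bar>\<theta> (k + r * s + i)\<bar>"
      using True by (simp add: affine_map_def abs_triangle_ineq)
    also have "\<bar>\<Sum>j=1..s. \<theta> (k + (i - 1) * s + j) * x j\<bar> \<le> (\<Sum>j=1..s. \<bar>\<theta> (k + (i - 1) * s + j) * x j\<bar>)"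
      by (rule sum_abs)
    also have "\<dots> \<le> (\<Sum>j=1..s. R * H)"
      apply (rule sum_mono) unfolding abs_mult
      using th x R0 by (meson abs_ge_zero mult_mono)
    also have "\<bar>\<theta> (k + r * s + i)\<bar> \<le> R * H" using th R0 H
      by (metis mult.right_neutral mult_left_mono order_trans)
    finally show ?thesis by (simp add: algebra_simps)
  qed
qed

lemma affine_diff:
  fixes \<theta> \<eta> x y :: "nat \<Rightarrow> real"
  assumes th: "\<forall>i. \<bar>\<eta> i\<bar> \<le> R" and d: "\<forall>i. \<bar>\<theta> i - \<eta> i\<bar> \<le> \<delta>"
    and x: "\<forall>j\<in>{1..s}. \<bar>x j\<bar> \<le> H" and xy: "\<forall>j\<in>{1..s}. \<bar>x j - y j\<bar> \<le> E"
    and H: "H \<ge> 1" and E: "E \<ge> 0"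
  shows "\<bar>affine_map \<theta> k r s x i - affine_map \<eta> k r s y i\<bar> \<le> (real s + 1) * (\<delta> * H + R * E)"
proof -
  have R0: "R \<ge> 0" using th[rule_format, of 0] by linarith
  have d0: "\<delta> \<ge> 0" using d[rule_format, of 0] by linarith
  show ?thesis
  proof (cases "i \<in> {1..r}")
    case False
    hence "affine_map \<theta> k r s x i = 0" "affine_map \<eta> k r s y i = 0" unfolding affine_map_def by auto
    thus ?thesis using R0 H d0 E by simp
  next
    case True
    have eq: "affine_map \<theta> k r s x i - affine_map \<eta> k r s y i =
      (\<Sum>j=1..s. \<theta> (k + (i - 1) * s + j) * x j - \<eta> (k + (i - 1) * s + j) * y j) + (\<theta> (k + r * s + i) - \<eta> (k + r * s + i))"
      using True by (simp add: affine_map_def sum_subtractf)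
    have "\<bar>affine_map \<theta> k r s x i - affine_map \<eta> k r s y i\<bar> \<le> \<bar>\<Sum>j=1..s. \<theta> (k + (i - 1) * s + j) * x j - \<eta> (k + (i - 1) * s + j) * y j\<bar> + \<bar>\<theta> (k + r * s + i) - \<eta> (k + r * s + i)\<bar>"
      unfolding eq by (rule abs_triangle_ineq)
    also have "\<bar>\<Sum>j=1..s. \<theta> (k + (i - 1) * s + j) * x j - \<eta> (k + (i - 1) * s + j) * y j\<bar> \<le> (\<Sum>j=1..s. \<bar>\<theta> (k + (i - 1) * s + j) * x j - \<eta> (k + (i - 1) * s + j) * y j\<bar>)"
      by (rule sum_abs)
    also have "\<dots> \<le> (\<Sum>j=1..s. \<delta> * H + R * E)"
    proof (rule sum_mono)
      fix j assume j: "j \<in> {1..s}"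
      define a where "a = \<theta> (k + (i - 1) * s + j)"
      define b where "b = \<eta> (k + (i - 1) * s + j)"
      have "a * x j - b * y j = (a - b) * x j + b * (x j - y j)" by (simp add: algebra_simps)
      hence "\<bar>a * x j - b * y j\<bar> \<le> \<bar>a - b\<bar> * \<bar>x j\<bar> + \<bar>b\<bar> * \<bar>x j - y j\<bar>"
        by (metis abs_mult abs_triangle_ineq)
      also have "\<dots> \<le> \<delta> * H + R * E"
        apply (rule add_mono; rule mult_mono)
        using d th x xy j d0 R0 by (auto simp: a_def b_def)
      finally show "\<bar>\<theta> (k + (i - 1) * s + j) * x j - \<eta> (k + (i - 1) * s + j) * y j\<bar> \<le> \<delta> * H + R * E"
        by (simp add: a_def b_def)
    qed
    also have "\<bar>\<theta> (k + r * s + i) - \<eta> (k + r * s + i)\<bar> \<le> \<delta> * H + R * E" using d d0 R0 H E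
      by (metis add_increasing2 mult_left_mono mult_nonneg_nonneg mult.right_neutral order_trans)
    finally show ?thesis by (simp add: algebra_simps)
  qed
qed

lemma hid_bound:
  fixes \<theta> x :: "nat \<Rightarrow> real"
  assumes th: "\<forall>i. \<bar>\<theta> i\<bar> \<le> R" and R: "R \<ge> 1" and B: "B \<ge> 1"
    and W: "\<forall>j<length l. real (l!j) \<le> W"
    and x: "\<forall>j\<in>{1..l!0}. \<bar>x j\<bar> \<le> B"
  shows "k < length l \<Longrightarrow> j \<in> {1..l!k} \<Longrightarrow> \<bar>hidden_layers \<theta> l k x j\<bar> \<le> B * ((W+1)*R)^k"
proof (induction k arbitrary: j)
  case 0 thus ?case using x by simp
next
  case (Suc k)
  have W0: "W \<ge> 0" using W[rule_format, of 0] Suc.prems by fastforce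
  have "1 * 1 \<le> (W+1)*R" using R W0 by (intro mult_mono) auto
  hence "1 \<le> ((W+1)*R)^k" by (intro one_le_power) simp
  hence H: "B * ((W+1)*R)^k \<ge> 1" using B by (metis mult_mono' mult_1 zero_le_one)
  have "\<bar>hidden_layers \<theta> l (Suc k) x j\<bar> \<le> \<bar>affine_map \<theta> (arch_offset l k) (l ! Suc k) (l ! k) (hidden_layers \<theta> l k x) j\<bar>"
    using Suc.prems by (simp add: relu_map_def)
  also have "\<dots> \<le> (real (l!k) + 1) * R * (B * ((W+1)*R)^k)"
    by (rule affine_bound[OF th _ H]) (use Suc in auto)
  also have "\<dots> \<le> (W + 1) * R * (B * ((W+1)*R)^k)"
    apply (rule mult_right_mono)+ using W Suc.prems R H by auto
  finally show ?case by (simp add: algebra_simps)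
qed


lemma relu_lip: "\<bar>max (a::real) 0 - max b 0\<bar> \<le> \<bar>a - b\<bar>" by (simp add: max_def abs_if)
lemma clip_lip: "\<bar>max (u::real) (min a v) - max u (min b v)\<bar> \<le> \<bar>a - b\<bar>" by (simp add: max_def min_def abs_if)

lemma pre_diff_step:
  fixes \<theta> \<eta> x :: "nat \<Rightarrow> real"
  assumes th: "\<forall>i. \<bar>\<theta> i\<bar> \<le> R" and eta: "\<forall>i. \<bar>\<eta> i\<bar> \<le> R" and d: "\<forall>i. \<bar>\<theta> i - \<eta> i\<bar> \<le> \<delta>"
   and R: "R \<ge> 1" and B: "B \<ge> 1" and W: "\<forall>j<length l. real (l!j) \<le> W" and x: "\<forall>j\<in>{1..l!0}. \<bar>x j\<bar> \<le> B"
   and k: "Suc k < length l"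
   and IH: "\<forall>j\<in>{1..l!k}. \<bar>hidden_layers \<theta> l k x j - hidden_layers \<eta> l k x j\<bar> \<le> real k * \<delta> * B * (W+1)^k * R^k / R"
  shows "\<bar>affine_map \<theta> (arch_offset l k) (l ! Suc k) (l ! k) (hidden_layers \<theta> l k x) j
        - affine_map \<eta> (arch_offset l k) (l ! Suc k) (l ! k) (hidden_layers \<eta> l k x) j\<bar>
        \<le> real (Suc k) * \<delta> * B * (W+1)^Suc k * R^Suc k / R"
proof -
  have W0: "W \<ge> 0" using W[rule_format, of 0] k by fastforce
  have d0: "\<delta> \<ge> 0" using d[rule_format, of 0] by linarith
  have "1 * 1 \<le> (W+1)*R" using R W0 by (intro mult_mono) auto
  hence "1 \<le> ((W+1)*R)^k" by (intro one_le_power) simp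
  hence H: "B * ((W+1)*R)^k \<ge> 1" using B by (metis mult_mono' mult_1 zero_le_one)
  have E: "real k * \<delta> * B * (W+1)^k * R^k / R \<ge> 0" using d0 B W0 R by simp
  have "\<bar>affine_map \<theta> (arch_offset l k) (l ! Suc k) (l ! k) (hidden_layers \<theta> l k x) j
        - affine_map \<eta> (arch_offset l k) (l ! Suc k) (l ! k) (hidden_layers \<eta> l k x) j\<bar>
     \<le> (real (l!k) + 1) * (\<delta> * (B * ((W+1)*R)^k) + R * (real k * \<delta> * B * (W+1)^k * R^k / R))"
    apply (rule affine_diff[OF eta d _ _ H E])
    using hid_bound[OF th R B W x, of k] k IH by auto
  also have "\<dots> \<le> (W + 1) * (\<delta> * (B * ((W+1)*R)^k) + R * (real k * \<delta> * B * (W+1)^k * R^k / R))"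
    apply (rule mult_right_mono)
    subgoal using W k by auto
    subgoal using E d0 H R B W0 by (intro add_nonneg_nonneg mult_nonneg_nonneg) auto
    done
  also have "\<dots> = real (Suc k) * \<delta> * B * (W+1)^Suc k * R^Suc k / R"
    using R unfolding power_mult_distrib by (simp add: field_simps)
  finally show ?thesis .
qed

lemma hid_diff:
  fixes \<theta> \<eta> x :: "nat \<Rightarrow> real"
  assumes th: "\<forall>i. \<bar>\<theta> i\<bar> \<le> R" and eta: "\<forall>i. \<bar>\<eta> i\<bar> \<le> R" and d: "\<forall>i. \<bar>\<theta> i - \<eta> i\<bar> \<le> \<delta>"
   and R: "R \<ge> 1" and B: "B \<ge> 1" and W: "\<forall>j<length l. real (l!j) \<le> W" and x: "\<forall>j\<in>{1..l!0}. \<bar>x j\<bar> \<le> B"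
  shows "k < length l \<Longrightarrow> \<forall>j\<in>{1..l!k}. \<bar>hidden_layers \<theta> l k x j - hidden_layers \<eta> l k x j\<bar> \<le> real k * \<delta> * B * (W+1)^k * R^k / R"
proof (induction k)
  case 0 thus ?case by simp
next
  case (Suc k)
  have IH: "\<forall>j\<in>{1..l!k}. \<bar>hidden_layers \<theta> l k x j - hidden_layers \<eta> l k x j\<bar> \<le> real k * \<delta> * B * (W+1)^k * R^k / R"
    using Suc by simp
  show ?case
  proof
    fix j assume j: "j \<in> {1..l ! Suc k}"
    have "\<bar>hidden_layers \<theta> l (Suc k) x j - hidden_layers \<eta> l (Suc k) x j\<bar> \<le>
      \<bar>affine_map \<theta> (arch_offset l k) (l ! Suc k) (l ! k) (hidden_layers \<theta> l k x) j
        - affine_map \<eta> (arch_offset l k) (l ! Suc k) (l ! k) (hidden_layers \<eta> l k x) j\<bar>"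
      using j by (simp add: relu_map_def relu_lip)
    also have "\<dots> \<le> real (Suc k) * \<delta> * B * (W+1)^Suc k * R^Suc k / R"
      by (rule pre_diff_step[OF th eta d R B W x Suc.prems IH])
    finally show "\<bar>hidden_layers \<theta> l (Suc k) x j - hidden_layers \<eta> l (Suc k) x j\<bar> \<le> real (Suc k) * \<delta> * B * (W+1)^Suc k * R^Suc k / R" .
  qed
qed

lemma net_diff:
  fixes \<theta> \<eta> x :: "nat \<Rightarrow> real"
  assumes th: "\<forall>i. \<bar>\<theta> i\<bar> \<le> R" and eta: "\<forall>i. \<bar>\<eta> i\<bar> \<le> R" and d: "\<forall>i. \<bar>\<theta> i - \<eta> i\<bar> \<le> \<delta>"
   and R: "R \<ge> 1" and B: "B \<ge> 1" and W: "\<forall>j<length l. real (l!j) \<le> W" and x: "\<forall>j\<in>{1..l!0}. \<bar>x j\<bar> \<le> B"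
   and L: "length l = L + 1" "L \<ge> 1" and lL: "l ! L = 1"
  shows "\<bar>clipped_net \<theta> l u v x 1 - clipped_net \<eta> l u v x 1\<bar> \<le> real L * \<delta> * B * (W+1)^L * R^L / R"
proof -
  obtain k where k: "L = Suc k" using L by (cases L) auto
  have kl: "Suc k < length l" using L k by simp
  have "\<bar>clipped_net \<theta> l u v x 1 - clipped_net \<eta> l u v x 1\<bar> \<le>
      \<bar>affine_map \<theta> (arch_offset l k) (l ! Suc k) (l ! k) (hidden_layers \<theta> l k x) 1
        - affine_map \<eta> (arch_offset l k) (l ! Suc k) (l ! k) (hidden_layers \<eta> l k x) 1\<bar>"
    using L k lL by (simp add: clipped_net_def clip_map_def clip_lip)
  also have "\<dots> \<le> real (Suc k) * \<delta> * B * (W+1)^Suc k * R^Suc k / R"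
    by (rule pre_diff_step[OF th eta d R B W x kl hid_diff[OF th eta d R B W x]]) (use kl in simp)
  finally show ?thesis using k by simp
qed



definition gridc :: "real \<Rightarrow> nat \<Rightarrow> nat \<Rightarrow> real" where
  "gridc R N j = -R + (2 * real j + 1) * R / real N"

definition grid :: "nat \<Rightarrow> real \<Rightarrow> nat \<Rightarrow> (nat \<Rightarrow> real) set" where
  "grid d R N = (\<lambda>f i. if i \<in> {1..d} then gridc R N (f i) else 0) ` (PiE {1..d} (\<lambda>_. {..<N}))"

lemma grid_finite: "finite (grid d R N)"
  unfolding grid_def by (intro finite_imageI finite_PiE) auto

lemma grid_card: "card (grid d R N) \<le> N ^ d"
proof -
  have "card (grid d R N) \<le> card (PiE {1..d} (\<lambda>_. {..<N}::nat set))"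
    unfolding grid_def by (rule card_image_le) (intro finite_PiE, auto)
  also have "\<dots> = N ^ d" by (simp add: card_PiE)
  finally show ?thesis .
qed

lemma gridc_bound: "R \<ge> 0 \<Longrightarrow> j < N \<Longrightarrow> \<bar>gridc R N j\<bar> \<le> R"
proof -
  assume R: "R \<ge> 0" and j: "j < N"
  have N: "real N > 0" using j by simp
  have a: "(2 * real j + 1) * R / real N \<ge> 0" using R N by simp
  have "(2 * real j + 1) * R \<le> 2 * real N * R" using j R by (intro mult_right_mono) auto
  hence b: "(2 * real j + 1) * R / real N \<le> 2 * R" using N by (simp add: divide_le_eq mult_ac)
  show ?thesis unfolding gridc_def using a b by linarith
qed

lemma grid_sub: "R \<ge> 0 \<Longrightarrow> grid d R N \<subseteq> param_box d R"
  unfolding grid_def param_box_def using gridc_bound by (force simp: PiE_iff)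

lemma coord_approx:
  assumes R: "R > 0" and N: "N \<ge> 1" and t: "\<bar>t\<bar> \<le> R"
  shows "\<exists>j<N. \<bar>t - gridc R N j\<bar> \<le> R / real N"
proof -
  define t' where "t' = (t + R) * real N / (2 * R)"
  have Np: "real N > 0" using N by simp
  have t0: "t' \<ge> 0" using t R Np unfolding t'_def by (simp add: abs_le_iff)
  have t1: "t' \<le> real N" using t R Np unfolding t'_def by (simp add: abs_le_iff divide_le_eq mult_ac)
  define j where "j = min (N - 1) (nat \<lfloor>t'\<rfloor>)"
  have jN: "j < N" using N unfolding j_def by simp
  have jt: "real j \<le> t' \<and> t' \<le> real j + 1"
  proof (cases "nat \<lfloor>t'\<rfloor> \<le> N - 1")
    case True
    hence "j = nat \<lfloor>t'\<rfloor>" unfolding j_def by simp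
    thus ?thesis using t0 by linarith
  next
    case False
    hence "j = N - 1" unfolding j_def by simp
    moreover have "real N \<le> t'" using False t0 N by linarith
    ultimately show ?thesis using t1 N by (simp add: of_nat_diff)
  qed
  have eq: "t - gridc R N j = (2 * t' - 2 * real j - 1) * R / real N"
    unfolding gridc_def t'_def using R Np by (simp add: field_simps)
  have "\<bar>2 * t' - 2 * real j - 1\<bar> \<le> 1" using jt by linarith
  hence "\<bar>2 * t' - 2 * real j - 1\<bar> * R / real N \<le> 1 * R / real N"
    using R Np by (intro divide_right_mono mult_right_mono) auto
  hence "\<bar>t - gridc R N j\<bar> \<le> R / real N" unfolding eq using R by (simp add: abs_mult)
  thus ?thesis using jN by blast
qed

lemma grid_approx:
  assumes R: "R > 0" and N: "N \<ge> 1" and th: "\<theta> \<in> param_box d R"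
  shows "\<exists>\<eta>\<in>grid d R N. \<forall>i. \<bar>\<theta> i - \<eta> i\<bar> \<le> R / real N"
proof -
  have "\<forall>i\<in>{1..d}. \<exists>j. j < N \<and> \<bar>\<theta> i - gridc R N j\<bar> \<le> R / real N"
    using coord_approx[OF R N] th unfolding param_box_def by blast
  then obtain f where f: "\<forall>i\<in>{1..d}. f i < N \<and> \<bar>\<theta> i - gridc R N (f i)\<bar> \<le> R / real N"
    by metis
  define \<eta> where "\<eta> = (\<lambda>i. if i \<in> {1..d} then gridc R N (restrict f {1..d} i) else 0)"
  have mem: "restrict f {1..d} \<in> PiE {1..d} (\<lambda>_. {..<N})" using f by (simp add: restrict_PiE_iff)
  have "\<eta> \<in> grid d R N" unfolding grid_def \<eta>_def by (rule imageI[OF mem])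
  moreover have "\<forall>i. \<bar>\<theta> i - \<eta> i\<bar> \<le> R / real N"
    using f th R unfolding \<eta>_def param_box_def by auto
  ultimately show ?thesis by blast
qed



lemma hid_meas:
  "k < length l \<Longrightarrow> j \<in> {1..l!k} \<Longrightarrow> (\<lambda>x. hidden_layers \<theta> l k x j) \<in> borel_measurable (PiM {1..l!0} (\<lambda>_. borel))"
proof (induction k arbitrary: j)
  case 0 thus ?case by (simp add: measurable_component_singleton)
next
  case (Suc k)
  have IH: "\<And>j. j \<in> {1..l!k} \<Longrightarrow> (\<lambda>x. hidden_layers \<theta> l k x j) \<in> borel_measurable (PiM {1..l!0} (\<lambda>_. borel))"
    using Suc by simp
  have eq: "\<And>x. hidden_layers \<theta> l (Suc k) x j = max ((\<Sum>i=1..l!k. \<theta> (arch_offset l k + (j - 1) * l!k + i) * hidden_layers \<theta> l k x i) + \<theta> (arch_offset l k + l!Suc k * l!k + j)) 0"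
    using Suc.prems by (simp add: relu_map_def affine_map_def)
  show ?case unfolding eq
    by (intro borel_measurable_max borel_measurable_add borel_measurable_sum borel_measurable_times borel_measurable_const IH) auto
qed

lemma net_meas:
  assumes "length l = L + 1" "L \<ge> 1" "l ! L = 1"
  shows "(\<lambda>x. clipped_net \<theta> l u v x 1) \<in> borel_measurable (PiM {1..l!0} (\<lambda>_. borel))"
proof -
  obtain k where k: "L = Suc k" using assms by (cases L) auto
  have eq: "\<And>x. clipped_net \<theta> l u v x 1 = max u (min ((\<Sum>i=1..l!k. \<theta> (arch_offset l k + (1 - 1) * l!k + i) * hidden_layers \<theta> l k x i) + \<theta> (arch_offset l k + l!Suc k * l!k + 1)) v)"
    using assms k by (simp add: clipped_net_def clip_map_def affine_map_def)
  show ?thesis unfolding eq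
    by (intro borel_measurable_max borel_measurable_min borel_measurable_add borel_measurable_sum borel_measurable_times borel_measurable_const hid_meas) (use assms k in auto)
qed

lemma hoeff:
  fixes Z :: "nat \<Rightarrow> 'a \<Rightarrow> real"
  assumes P: "prob_space P" and ind: "prob_space.indep_vars P (\<lambda>_. borel) Z {1..M}"
    and dis: "\<forall>m\<in>{1..M}. distr P borel (Z m) = distr P borel (Z 1)"
    and bd: "\<forall>m\<in>{1..M}. \<forall>\<omega>\<in>space P. Z m \<omega> \<in> {0..c}" and c: "c > 0" and M: "M \<ge> 1" and e: "e \<ge> 0"
  shows "measure P {\<omega>\<in>space P. \<bar>(\<Sum>m=1..M. Z m \<omega>) / real M - prob_space.expectation P (Z 1)\<bar> \<ge> e}
     \<le> 2 * exp (-2 * real M * e^2 / c^2)"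
proof -
  interpret prob_space P by (rule P)
  have rv: "random_variable borel (Z 1)" using ind M unfolding indep_vars_def by auto
  interpret H: Hoeffding_ineq_iid P "{1..M}" Z "Z 1" 0 c "expectation (Z 1)"
  proof unfold_locales
    show "finite {1..M}" by simp
    show "indep_vars (\<lambda>_. borel) Z {1..M}" by (rule ind)
    show "\<And>i. i \<in> {1..M} \<Longrightarrow> distr P borel (Z i) = distr P borel (Z 1)" using dis by blast
    show "random_variable borel (Z 1)" by (rule rv)
    show "AE x in P. Z 1 x \<in> {0..c}" using bd M by (intro AE_I2) simp
  qed
  have "measure P {\<omega>\<in>space P. \<bar>(\<Sum>m\<in>{1..M}. Z m \<omega>) / real (card {1..M}) - expectation (Z 1)\<bar> \<ge> e}
     \<le> 2 * exp (-2 * real (card {1..M}) * e^2 / (c - 0)^2)"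
    by (rule H.Hoeffding_ineq_abs_ge'[OF e]) (use c M in auto)
  thus ?thesis by simp
qed


theorem lemma3p21:
  fixes d M L :: nat and u v R \<epsilon> b :: real and l :: "nat list"
    and D :: "(nat \<Rightarrow> real) set"
    and P :: "'a measure"
    and X :: "nat \<Rightarrow> 'a \<Rightarrow> (nat \<Rightarrow> real)" and Y :: "nat \<Rightarrow> 'a \<Rightarrow> real"
    and \<E> :: "((nat \<Rightarrow> real) \<Rightarrow> real) \<Rightarrow> real"
    and \<E>emp :: "(nat \<Rightarrow> real) \<Rightarrow> 'a \<Rightarrow> real"
    and S :: "'a \<Rightarrow> ennreal"
  assumes "d \<ge> 1" and "M \<ge> 1" and "L \<ge> 1"
    and "u < v" and "R \<ge> 1" and "\<epsilon> > 0" and "b > 0"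
    and "length l = L + 1" and "\<forall>k \<in> set l. k \<ge> 1" and "l ! L = 1"
    and "arch_offset l L \<le> d"
    and "D \<subseteq> PiE {1..l ! 0} (\<lambda>_. {-b..b})" and "compact D"
    and "prob_space P"
    and "\<forall>m\<in>{1..M}. \<forall>\<omega>\<in>space P. X m \<omega> \<in> D \<and> Y m \<omega> \<in> {u..v}"
    and "\<forall>m\<in>{1..M}. X m \<in> measurable P (PiM {1..l ! 0} (\<lambda>_. borel))"
    and "\<forall>m\<in>{1..M}. Y m \<in> borel_measurable P"
    and "prob_space.indep_vars P (\<lambda>_. PiM {1..l ! 0} (\<lambda>_. borel) \<Otimes>\<^sub>M borel)
           (\<lambda>m \<omega>. (X m \<omega>, Y m \<omega>)) {1..M}"
    and "\<forall>m\<in>{1..M}. distr P (PiM {1..l ! 0} (\<lambda>_. borel) \<Otimes>\<^sub>M borel) (\<lambda>\<omega>. (X m \<omega>, Y m \<omega>))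
           = distr P (PiM {1..l ! 0} (\<lambda>_. borel) \<Otimes>\<^sub>M borel) (\<lambda>\<omega>. (X 1 \<omega>, Y 1 \<omega>))"
  defines "\<E> \<equiv> \<lambda>f. integral\<^sup>L P (\<lambda>\<omega>. \<bar>f (X 1 \<omega>) - Y 1 \<omega>\<bar> ^ 2)"
    and "\<E>emp \<equiv> \<lambda>\<theta> \<omega>. (1 / real M) * (\<Sum>m=1..M. \<bar>clipped_net \<theta> l u v (X m \<omega>) 1 - Y m \<omega>\<bar> ^ 2)"
    and "S \<equiv> \<lambda>\<omega>. (SUP \<theta>\<in>param_box d R.
              ennreal \<bar>\<E>emp \<theta> \<omega> - \<E> (\<lambda>x. clipped_net \<theta> l u v x 1)\<bar>)"
  shows "S \<in> borel_measurable P \<and>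
         measure P {\<omega> \<in> space P. S \<omega> \<ge> ennreal \<epsilon>}
         \<le> 2 * max 1 ((32 * real L * max 1 b * (real (Max (set l)) + 1) ^ L * R ^ L * (v - u) / \<epsilon>) ^ d)
             * exp (- (\<epsilon> ^ 2) * real M / (2 * (v - u) ^ 4))"
proof -
  interpret prob_space P by (rule assms(14))
  note E_def = assms(20) and Eemp_def = assms(21) and S_def = assms(22)
  have M1: "M \<ge> 1" and L1: "L \<ge> 1" and uv: "u < v" and R1: "R \<ge> 1" and e0: "\<epsilon> > 0" and b0: "b > 0"
    using assms by auto
  have len: "length l = L + 1" and lL: "l ! L = 1" using assms by auto
  define W where "W = real (Max (set l))"
  define B where "B = max 1 b"
  have Wl: "\<forall>j<length l. real (l!j) \<le> W"
    unfolding W_def by (auto intro!: Max_ge)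
  have W0: "W \<ge> 0" unfolding W_def by simp
  have B1: "B \<ge> 1" unfolding B_def by simp
  define f where "f \<theta> x = clipped_net \<theta> l u v x 1" for \<theta> x
  define Mx where "Mx = PiM {1..l!0} (\<lambda>_. borel::real measure)"
  define g where "g \<theta> p = \<bar>f \<theta> (fst p) - snd p\<bar>^2" for \<theta> p
  have fmeas[measurable]: "f \<theta> \<in> borel_measurable Mx" for \<theta>
    unfolding f_def Mx_def by (rule net_meas[OF len L1 lL])
  have gmeas[measurable]: "g \<theta> \<in> borel_measurable (Mx \<Otimes>\<^sub>M borel)" for \<theta>
    unfolding g_def by measurable
  have Xm[measurable]: "X m \<in> measurable P Mx" if "m \<in> {1..M}" for m
    using assms(16) that unfolding Mx_def by auto
  have Ym[measurable]: "Y m \<in> borel_measurable P" if "m \<in> {1..M}" for m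
    using assms(17) that by auto
  have pairmeas: "(\<lambda>\<omega>. (X m \<omega>, Y m \<omega>)) \<in> measurable P (Mx \<Otimes>\<^sub>M borel)" if "m \<in> {1..M}" for m
    using that by measurable
  have frange: "f \<theta> x \<in> {u..v}" for \<theta> x
    unfolding f_def clipped_net_def clip_map_def using len lL uv by (simp add: Let_def)
  have box_bd: "\<forall>i. \<bar>\<theta> i\<bar> \<le> R" if "\<theta> \<in> param_box d R" for \<theta>
    using that R1 unfolding param_box_def by force
  have xD: "\<forall>j\<in>{1..l!0}. \<bar>x j\<bar> \<le> B" if "x \<in> D" for x
  proof
    fix j assume j: "j \<in> {1..l!0}"
    have "x j \<in> {-b..b}" using assms(12) that j by (auto simp: PiE_iff)
    thus "\<bar>x j\<bar> \<le> B" unfolding B_def by auto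
  qed
  define Lip where "Lip = real L * B * (W+1)^L * R^L / R"
  have Lip0: "Lip > 0" unfolding Lip_def using L1 B1 W0 R1 by simp
  have fdiff: "\<bar>f \<theta> x - f \<eta> x\<bar> \<le> \<delta> * Lip"
    if "\<theta> \<in> param_box d R" "\<eta> \<in> param_box d R" "\<forall>i. \<bar>\<theta> i - \<eta> i\<bar> \<le> \<delta>" "x \<in> D" for \<theta> \<eta> \<delta> x
    using net_diff[OF box_bd[OF that(1)] box_bd[OF that(2)] that(3) R1 B1 Wl xD[OF that(4)] len L1 lL, of u v]
    unfolding f_def Lip_def by (simp add: mult_ac)
  have gdiff: "\<bar>g \<theta> (x,y) - g \<eta> (x,y)\<bar> \<le> 2*(v-u)*(\<delta>*Lip)"
    if "\<theta> \<in> param_box d R" "\<eta> \<in> param_box d R" "\<forall>i. \<bar>\<theta> i - \<eta> i\<bar> \<le> \<delta>" "x \<in> D" "y \<in> {u..v}" for \<theta> \<eta> \<delta> x y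
  proof -
    define a where "a = f \<theta> x - y"
    define c where "c = f \<eta> x - y"
    have a: "\<bar>a\<bar> \<le> v - u" and c: "\<bar>c\<bar> \<le> v - u" using frange[of \<theta> x] frange[of \<eta> x] that(5)
      unfolding a_def c_def by auto
    have ac: "\<bar>a - c\<bar> \<le> \<delta> * Lip" unfolding a_def c_def using fdiff[OF that(1-4)] by simp
    have "\<bar>g \<theta> (x,y) - g \<eta> (x,y)\<bar> = \<bar>a - c\<bar> * \<bar>a + c\<bar>"
      unfolding g_def a_def c_def by (simp add: power2_eq_square abs_mult[symmetric] algebra_simps)
    also have "\<dots> \<le> (\<delta> * Lip) * (2*(v-u))"
      using a c ac by (intro mult_mono) auto
    finally show ?thesis by (simp add: mult_ac)
  qed
  have gbd: "g \<theta> (x,y) \<in> {0..(v-u)^2}" if "y \<in> {u..v}" for \<theta> x y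
  proof -
    have "\<bar>f \<theta> x - y\<bar> \<le> v - u" using frange[of \<theta> x] that by auto
    hence "\<bar>f \<theta> x - y\<bar>^2 \<le> (v-u)^2" by (rule power_mono) simp
    thus ?thesis unfolding g_def by simp
  qed
  define Z where "Z \<theta> m \<omega> = g \<theta> (X m \<omega>, Y m \<omega>)" for \<theta> m \<omega>
  have Zmeas[measurable]: "Z \<theta> m \<in> borel_measurable P" if "m \<in> {1..M}" for \<theta> m
    unfolding Z_def using measurable_comp[OF pairmeas[OF that] gmeas[of \<theta>]] by (simp add: o_def)
  have XYin: "X m \<omega> \<in> D" "Y m \<omega> \<in> {u..v}" if "m \<in> {1..M}" "\<omega> \<in> space P" for m \<omega>
    using assms(15) that by auto
  have Zbd: "Z \<theta> m \<omega> \<in> {0..(v-u)^2}" if "m \<in> {1..M}" "\<omega> \<in> space P" for \<theta> m \<omega>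
    unfolding Z_def using gbd XYin[OF that] by blast
  have one: "1 \<in> {1..M}" using M1 by simp
  have Zint: "integrable P (Z \<theta> 1)" for \<theta>
    by (rule integrable_const_bound[where B="(v-u)^2"]) (use Zbd[OF one] Zmeas[OF one] in \<open>auto intro!: AE_I2\<close>)
  have Eemp_eq: "\<E>emp \<theta> \<omega> = (\<Sum>m=1..M. Z \<theta> m \<omega>) / real M" for \<theta> \<omega>
    unfolding Eemp_def Z_def g_def f_def by simp
  have E_eq: "\<E> (\<lambda>x. clipped_net \<theta> l u v x 1) = expectation (Z \<theta> 1)" for \<theta>
    unfolding E_def Z_def g_def f_def by simp
  define dif where "dif \<theta> \<omega> = \<E>emp \<theta> \<omega> - \<E> (\<lambda>x. clipped_net \<theta> l u v x 1)" for \<theta> \<omega>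
  have difmeas[measurable]: "(\<lambda>\<omega>. dif \<theta> \<omega>) \<in> borel_measurable P" for \<theta>
    unfolding dif_def Eemp_eq E_eq by (intro borel_measurable_diff borel_measurable_divide borel_measurable_sum Zmeas borel_measurable_const) auto
  have difdiff: "\<bar>dif \<theta> \<omega> - dif \<eta> \<omega>\<bar> \<le> 4*(v-u)*(\<delta>*Lip)"
    if th: "\<theta> \<in> param_box d R" "\<eta> \<in> param_box d R" "\<forall>i. \<bar>\<theta> i - \<eta> i\<bar> \<le> \<delta>" and w: "\<omega> \<in> space P" for \<theta> \<eta> \<delta> \<omega>
  proof -
    have Zd: "\<bar>Z \<theta> m \<omega>' - Z \<eta> m \<omega>'\<bar> \<le> 2*(v-u)*(\<delta>*Lip)" if "m \<in> {1..M}" "\<omega>' \<in> space P" for m \<omega>'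
      unfolding Z_def by (rule gdiff[OF th XYin[OF that]])
    have "\<bar>\<E>emp \<theta> \<omega> - \<E>emp \<eta> \<omega>\<bar> = \<bar>\<Sum>m=1..M. Z \<theta> m \<omega> - Z \<eta> m \<omega>\<bar> / real M"
      unfolding Eemp_eq by (simp add: sum_subtractf diff_divide_distrib[symmetric])
    also have "\<dots> \<le> (\<Sum>m=1..M. 2*(v-u)*(\<delta>*Lip)) / real M"
      by (intro divide_right_mono order_trans[OF sum_abs] sum_mono Zd w) auto
    also have "\<dots> = 2*(v-u)*(\<delta>*Lip)" using M1 by simp
    finally have e1: "\<bar>\<E>emp \<theta> \<omega> - \<E>emp \<eta> \<omega>\<bar> \<le> 2*(v-u)*(\<delta>*Lip)" .
    have "\<bar>expectation (Z \<theta> 1) - expectation (Z \<eta> 1)\<bar> = \<bar>expectation (\<lambda>\<omega>. Z \<theta> 1 \<omega> - Z \<eta> 1 \<omega>)\<bar>"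
      using Zint by (simp add: integral_diff)
    also have "\<dots> \<le> expectation (\<lambda>\<omega>. \<bar>Z \<theta> 1 \<omega> - Z \<eta> 1 \<omega>\<bar>)"
      by (rule integral_abs_bound)
    also have "\<dots> \<le> expectation (\<lambda>_. 2*(v-u)*(\<delta>*Lip))"
      by (rule integral_mono) (use Zint Zd[OF one] in auto)
    also have "\<dots> = 2*(v-u)*(\<delta>*Lip)" by (simp add: prob_space)
    finally have e2: "\<bar>expectation (Z \<theta> 1) - expectation (Z \<eta> 1)\<bar> \<le> 2*(v-u)*(\<delta>*Lip)" .
    show ?thesis unfolding dif_def E_eq using e1 e2 by linarith
  qed
  have S_eq: "S \<omega> = (SUP \<theta>\<in>param_box d R. ennreal \<bar>dif \<theta> \<omega>\<bar>)" for \<omega>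
    unfolding S_def dif_def by simp
  define C where "C = 4*(v-u)*Lip"
  have C0: "C > 0" unfolding C_def using uv Lip0 by simp
  have difdiff': "\<bar>dif \<theta> \<omega>\<bar> \<le> \<bar>dif \<eta> \<omega>\<bar> + C * \<delta>"
    if "\<theta> \<in> param_box d R" "\<eta> \<in> param_box d R" "\<forall>i. \<bar>\<theta> i - \<eta> i\<bar> \<le> \<delta>" "\<omega> \<in> space P" for \<theta> \<eta> \<delta> \<omega>
    using difdiff[OF that] unfolding C_def by (simp add: mult_ac)
  have R0: "R > 0" using R1 by simp
  define Q where "Q = (\<Union>N\<in>{1..}. grid d R N)"
  have Qc: "countable Q" unfolding Q_def
    by (rule countable_UN) (simp_all add: countable_finite[OF grid_finite])
  have Qsub: "Q \<subseteq> param_box d R" unfolding Q_def using grid_sub[of R d] R0 by auto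
  have Sm: "S \<omega> = (SUP \<theta>\<in>Q. ennreal \<bar>dif \<theta> \<omega>\<bar>)" if w: "\<omega> \<in> space P" for \<omega>
  proof (unfold S_eq, rule antisym)
    show "(SUP \<theta>\<in>param_box d R. ennreal \<bar>dif \<theta> \<omega>\<bar>) \<le> (SUP \<theta>\<in>Q. ennreal \<bar>dif \<theta> \<omega>\<bar>)"
    proof (rule SUP_least)
      fix \<theta> assume th: "\<theta> \<in> param_box d R"
      show "ennreal \<bar>dif \<theta> \<omega>\<bar> \<le> (SUP \<theta>\<in>Q. ennreal \<bar>dif \<theta> \<omega>\<bar>)"
      proof (rule ennreal_le_epsilon)
        fix e :: real assume e: "0 < e"
        define N where "N = nat \<lceil>R * C / e\<rceil> + 1"
        have N1: "N \<ge> 1" unfolding N_def by simp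
        have "R * C / e < real N" unfolding N_def by linarith
        hence "R * C < real N * e" using e by (simp add: divide_less_eq mult_ac)
        hence Ne: "C * (R / real N) \<le> e" using N1 by (simp add: field_simps)
        obtain \<eta> where eta: "\<eta> \<in> grid d R N" "\<forall>i. \<bar>\<theta> i - \<eta> i\<bar> \<le> R / real N"
          using grid_approx[OF R0 N1 th] by blast
        have etaQ: "\<eta> \<in> Q" unfolding Q_def using eta(1) N1 by auto
        have "\<bar>dif \<theta> \<omega>\<bar> \<le> \<bar>dif \<eta> \<omega>\<bar> + e"
          using difdiff'[OF th subsetD[OF Qsub etaQ] eta(2) w] Ne by linarith
        hence "ennreal \<bar>dif \<theta> \<omega>\<bar> \<le> ennreal (\<bar>dif \<eta> \<omega>\<bar> + e)" by (rule ennreal_leI)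
        also have "\<dots> = ennreal \<bar>dif \<eta> \<omega>\<bar> + ennreal e" using e by (simp add: ennreal_plus)
        also have "\<dots> \<le> (SUP \<theta>\<in>Q. ennreal \<bar>dif \<theta> \<omega>\<bar>) + ennreal e"
          by (intro add_right_mono SUP_upper etaQ)
        finally show "ennreal \<bar>dif \<theta> \<omega>\<bar> \<le> (SUP \<theta>\<in>Q. ennreal \<bar>dif \<theta> \<omega>\<bar>) + ennreal e" .
      qed
    qed
    show "(SUP \<theta>\<in>Q. ennreal \<bar>dif \<theta> \<omega>\<bar>) \<le> (SUP \<theta>\<in>param_box d R. ennreal \<bar>dif \<theta> \<omega>\<bar>)"
      by (rule SUP_subset_mono[OF Qsub]) simp
  qed
  have Smeas: "S \<in> borel_measurable P"
  proof -
    have "(\<lambda>\<omega>. SUP \<theta>\<in>Q. ennreal \<bar>dif \<theta> \<omega>\<bar>) \<in> borel_measurable P"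
      by (rule borel_measurable_SUP[OF Qc]) measurable
    thus ?thesis using Sm by (subst measurable_cong) auto
  qed
  define K where "K = 32 * real L * max 1 b * (real (Max (set l)) + 1) ^ L * R ^ L * (v - u) / \<epsilon>"
  have K0: "K > 0" unfolding K_def using L1 R1 uv e0 by simp
  have RL: "R * Lip = real L * B * (W+1)^L * R^L" unfolding Lip_def using R0 by simp
  have KLip: "K = 8 * R * C / \<epsilon>"
  proof -
    have "8 * R * C = 32 * (v-u) * (R * Lip)" unfolding C_def by (simp add: mult_ac)
    thus ?thesis unfolding RL K_def W_def B_def by (simp add: mult_ac)
  qed
  define N0 where "N0 = nat \<lceil>K / 2\<rceil>"
  have N0K: "real N0 \<ge> K / 2" unfolding N0_def by linarith
  have N01: "N0 \<ge> 1" unfolding N0_def using K0 by linarith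
  have N0max: "real N0 \<le> max 1 K"
  proof (cases "K \<le> 2")
    case True
    hence "\<lceil>K / 2\<rceil> \<le> 1" using K0 by (simp add: ceiling_le_iff)
    thus ?thesis unfolding N0_def by linarith
  next
    case False
    have "real N0 < K / 2 + 1" unfolding N0_def using K0 by linarith
    thus ?thesis using False by simp
  qed
  have rad: "C * (R / real N0) \<le> \<epsilon> / 4"
  proof -
    have "R / real N0 \<le> R / (K / 2)" using R0 K0 N0K by (intro divide_left_mono) auto
    hence "C * (R / real N0) \<le> C * (R / (K / 2))" using C0 by (intro mult_left_mono) auto
    also have "\<dots> = \<epsilon> / 4" unfolding KLip using C0 R0 e0 by (simp add: field_simps)
    finally show ?thesis .
  qed
  define G where "G = grid d R N0"
  define A where "A \<eta> = {\<omega>\<in>space P. \<epsilon> / 2 \<le> \<bar>dif \<eta> \<omega>\<bar>}" for \<eta>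
  have Ameas: "A \<eta> \<in> sets P" for \<eta> unfolding A_def by measurable
  have sub: "{\<omega>\<in>space P. S \<omega> \<ge> ennreal \<epsilon>} \<subseteq> (\<Union>\<eta>\<in>G. A \<eta>)"
  proof
    fix \<omega> assume "\<omega> \<in> {\<omega>\<in>space P. S \<omega> \<ge> ennreal \<epsilon>}"
    hence w: "\<omega> \<in> space P" and Sw: "S \<omega> \<ge> ennreal \<epsilon>" by auto
    have "ennreal (3 * \<epsilon> / 4) < ennreal \<epsilon>" using e0 by (simp add: ennreal_less_iff)
    also note Sw
    finally have "ennreal (3 * \<epsilon> / 4) < (SUP \<theta>\<in>param_box d R. ennreal \<bar>dif \<theta> \<omega>\<bar>)" unfolding S_eq .
    then obtain \<theta> where th: "\<theta> \<in> param_box d R" and lt: "ennreal (3 * \<epsilon> / 4) < ennreal \<bar>dif \<theta> \<omega>\<bar>"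
      by (auto simp: less_SUP_iff)
    have lt': "3 * \<epsilon> / 4 < \<bar>dif \<theta> \<omega>\<bar>" using lt e0 by (subst (asm) ennreal_less_iff) auto
    obtain \<eta> where eta: "\<eta> \<in> G" "\<forall>i. \<bar>\<theta> i - \<eta> i\<bar> \<le> R / real N0"
      using grid_approx[OF R0 N01 th] unfolding G_def by blast
    have etab: "\<eta> \<in> param_box d R" using eta(1) grid_sub[of R d N0] R0 unfolding G_def by auto
    have "\<bar>dif \<theta> \<omega>\<bar> \<le> \<bar>dif \<eta> \<omega>\<bar> + C * (R / real N0)"
      by (rule difdiff'[OF th etab eta(2) w])
    hence "\<omega> \<in> A \<eta>" unfolding A_def using w lt' rad by auto
    thus "\<omega> \<in> (\<Union>\<eta>\<in>G. A \<eta>)" using eta(1) by blast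
  qed
  define ex where "ex = exp (- (\<epsilon> ^ 2) * real M / (2 * (v - u) ^ 4))"
  have hA: "measure P (A \<eta>) \<le> 2 * ex" for \<eta>
  proof -
    have ind0: "indep_vars (\<lambda>_. borel) (\<lambda>m \<omega>. g \<eta> ((\<lambda>m \<omega>. (X m \<omega>, Y m \<omega>)) m \<omega>)) {1..M}"
      by (rule indep_vars_compose2[OF assms(18)]) (use gmeas[of \<eta>] in \<open>simp add: Mx_def\<close>)
    have Zf: "Z \<eta> = (\<lambda>m \<omega>. g \<eta> ((\<lambda>m \<omega>. (X m \<omega>, Y m \<omega>)) m \<omega>))"
      by (simp add: Z_def fun_eq_iff)
    have ind: "indep_vars (\<lambda>_. borel) (Z \<eta>) {1..M}"
      unfolding Zf by (rule ind0)
    have dis: "\<forall>m\<in>{1..M}. distr P borel (Z \<eta> m) = distr P borel (Z \<eta> 1)"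
    proof
      fix m assume m: "m \<in> {1..M}"
      have eqd: "distr P (Mx \<Otimes>\<^sub>M borel) (\<lambda>\<omega>. (X m \<omega>, Y m \<omega>)) = distr P (Mx \<Otimes>\<^sub>M borel) (\<lambda>\<omega>. (X 1 \<omega>, Y 1 \<omega>))"
        using assms(19) m unfolding Mx_def by blast
      have "distr P borel (Z \<eta> m) = distr (distr P (Mx \<Otimes>\<^sub>M borel) (\<lambda>\<omega>. (X m \<omega>, Y m \<omega>))) borel (g \<eta>)"
        by (subst distr_distr[OF gmeas pairmeas[OF m]]) (simp add: Z_def[abs_def] o_def)
      also have "\<dots> = distr (distr P (Mx \<Otimes>\<^sub>M borel) (\<lambda>\<omega>. (X 1 \<omega>, Y 1 \<omega>))) borel (g \<eta>)"
        by (simp only: eqd)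
      also have "\<dots> = distr P borel (Z \<eta> 1)"
        by (subst distr_distr[OF gmeas pairmeas[OF one]]) (simp add: Z_def[abs_def] o_def)
      finally show "distr P borel (Z \<eta> m) = distr P borel (Z \<eta> 1)" .
    qed
    have c: "(v-u)^2 > 0" using uv by simp
    have e: "\<epsilon> / 2 \<ge> 0" using e0 by simp
    have bd: "\<forall>m\<in>{1..M}. \<forall>\<omega>\<in>space P. Z \<eta> m \<omega> \<in> {0..(v-u)^2}" using Zbd by blast
    have Aeq: "A \<eta> = {\<omega>\<in>space P. \<bar>(\<Sum>m=1..M. Z \<eta> m \<omega>) / real M - expectation (Z \<eta> 1)\<bar> \<ge> \<epsilon> / 2}"
      unfolding A_def dif_def Eemp_eq E_eq by simp
    have "measure P (A \<eta>) \<le> 2 * exp (-2 * real M * (\<epsilon> / 2)^2 / ((v-u)^2)^2)"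
      unfolding Aeq by (rule hoeff[OF assms(14) ind dis bd c M1 e])
    also have "-2 * real M * (\<epsilon> / 2)^2 / ((v-u)^2)^2 = - (\<epsilon> ^ 2) * real M / (2 * (v - u) ^ 4)"
      by (simp add: power_divide flip: power_mult)
    finally show ?thesis unfolding ex_def .
  qed
  have "measure P {\<omega>\<in>space P. S \<omega> \<ge> ennreal \<epsilon>} \<le> measure P (\<Union>\<eta>\<in>G. A \<eta>)"
    by (rule finite_measure_mono[OF sub]) (use Ameas grid_finite in \<open>auto simp: G_def\<close>)
  also have "\<dots> \<le> (\<Sum>\<eta>\<in>G. measure P (A \<eta>))"
    by (rule finite_measure_subadditive_finite) (use Ameas grid_finite in \<open>auto simp: G_def\<close>)
  also have "\<dots> \<le> (\<Sum>\<eta>\<in>G. 2 * ex)" by (rule sum_mono) (rule hA)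
  also have "\<dots> = real (card G) * (2 * ex)" by simp
  also have "\<dots> \<le> real N0 ^ d * (2 * ex)"
    using grid_card[of d R N0] unfolding G_def ex_def
    by (intro mult_right_mono) (simp_all add: of_nat_le_iff[symmetric] del: of_nat_le_iff)
  also have "\<dots> \<le> max 1 (K ^ d) * (2 * ex)"
  proof (intro mult_right_mono)
    have "real N0 ^ d \<le> (max 1 K) ^ d" using N0max by (intro power_mono) auto
    also have "\<dots> = max 1 (K ^ d)"
    proof (cases "K \<le> 1")
      case True
      hence "K ^ d \<le> 1" using K0 by (intro power_le_one) auto
      thus ?thesis using True by (simp add: max_absorb1)
    next
      case False thus ?thesis by (simp add: max_def one_le_power)
    qed
    finally show "real N0 ^ d \<le> max 1 (K ^ d)" .
  qed (simp add: ex_def)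
  finally have bound: "measure P {\<omega>\<in>space P. S \<omega> \<ge> ennreal \<epsilon>} \<le> 2 * max 1 (K ^ d) * ex"
    by (simp add: mult_ac)
  show ?thesis using Smeas bound unfolding K_def ex_def by simp
qed

end
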